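(* The finite Hilbert transform $T_2\colon L^2(-1,1)\to L^2(-1,1)$ has no continuous, $L^2$-valued extension to any genuinely larger Banach function space; that is, there is no Banach function space $Z$ with $L^2(-1,1)\subsetneq Z\subseteq L^1(-1,1)$ such that $T$ maps $Z$ continuously into $L^2(-1,1)$.
   Context: We work on $(-1,1)$ with Lebesgue measure. A Banach function space is a Banach space $Z$ of (classes of) complex measurable functions with the ideal property ($f\in Z$, $|g|\le|f|$ a.e. imply $g\in Z$, $\|g\|_Z\le\|f\|_Z$) and the Fatou property (if $f_n\in Z$, $0\le f_n\uparrow f$ a.e., $\sup_n\|f_n\|_Z<\infty$, then $f\in Z$ and $\|f_n\|_Z\to\|f\|_Z$). The finite Hilbert transform of $f\in L^1(-1,1)$ is $(Tf)(t)=\lim_{\varepsilon\to0^+}\frac1\pi\big(\int_{-1}^{t-\varepsilon}+\int_{t+\varepsilon}^1\big)\frac{f(x)}{x-t}\,dx$ (exists a.e.); it maps $L^2(-1,1)$ boundedly into itself, and this operator is denoted $T_2$. *)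

theory Defs
  imports "HOL-Analysis.Analysis"
begin

text \<open>Functions are total functions real to complex; only their restriction to (-1,1)
  matters (all conditions are relative to this measure space).\<close>

abbreviation I11 :: "real measure" where
  "I11 \<equiv> lebesgue_on {-1<..<(1::real)}"

definition L1I :: "(real \<Rightarrow> complex) set" where
  "L1I = {f. integrable I11 f}"

definition L2I :: "(real \<Rightarrow> complex) set" where
  "L2I = {f. f \<in> borel_measurable I11 \<and> integrable I11 (\<lambda>x. (cmod (f x))^2)}"

definition L2norm :: "(real \<Rightarrow> complex) \<Rightarrow> real" where
  "L2norm f = sqrt (integral\<^sup>L I11 (\<lambda>x. (cmod (f x))^2))"

text \<open>Finite Hilbert transform, as a principal value limit (exists a.e. for f in L1).\<close>
definition fhilbert :: "(real \<Rightarrow> complex) \<Rightarrow> real \<Rightarrow> complex" where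
  "fhilbert f t = Lim (at_right (0::real))
     (\<lambda>\<epsilon>. complex_of_real (1 / pi) *
        (LINT x : ({-1<..<t-\<epsilon>} \<union> {t+\<epsilon><..<1}) | lebesgue. f x / complex_of_real (x - t)))"

definition banach_function_space ::
    "(real \<Rightarrow> complex) set \<Rightarrow> ((real \<Rightarrow> complex) \<Rightarrow> real) \<Rightarrow> bool" where
  "banach_function_space Z nZ \<longleftrightarrow>
     (\<forall>f\<in>Z. f \<in> borel_measurable I11) \<and>
     (\<lambda>x. 0) \<in> Z \<and>
     (\<forall>f\<in>Z. \<forall>g\<in>Z. (\<lambda>x. f x + g x) \<in> Z) \<and>
     (\<forall>c. \<forall>f\<in>Z. (\<lambda>x. c * f x) \<in> Z) \<and>
     (\<forall>f\<in>Z. 0 \<le> nZ f) \<and>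
     (\<forall>f\<in>Z. nZ f = 0 \<longleftrightarrow> (AE x in I11. f x = 0)) \<and>
     (\<forall>c. \<forall>f\<in>Z. nZ (\<lambda>x. c * f x) = cmod c * nZ f) \<and>
     (\<forall>f\<in>Z. \<forall>g\<in>Z. nZ (\<lambda>x. f x + g x) \<le> nZ f + nZ g) \<and>
     \<comment> \<open>completeness\<close>
     (\<forall>u::nat \<Rightarrow> real \<Rightarrow> complex. (\<forall>n. u n \<in> Z) \<and>
        (\<forall>e>0. \<exists>N. \<forall>m\<ge>N. \<forall>n\<ge>N. nZ (\<lambda>x. u m x - u n x) < e) \<longrightarrow>
        (\<exists>f\<in>Z. (\<lambda>n. nZ (\<lambda>x. u n x - f x)) \<longlonglongrightarrow> 0)) \<and>
     \<comment> \<open>ideal property\<close>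
     (\<forall>f\<in>Z. \<forall>g. g \<in> borel_measurable I11 \<and> (AE x in I11. cmod (g x) \<le> cmod (f x)) \<longrightarrow>
        g \<in> Z \<and> nZ g \<le> nZ f) \<and>
     \<comment> \<open>Fatou property\<close>
     (\<forall>(r::nat \<Rightarrow> real \<Rightarrow> real) (F::real \<Rightarrow> real).
        (\<forall>n. (\<lambda>x. complex_of_real (r n x)) \<in> Z) \<and>
        (AE x in I11. (\<forall>n. 0 \<le> r n x \<and> r n x \<le> r (Suc n) x) \<and> (\<lambda>n. r n x) \<longlonglongrightarrow> F x) \<and>
        bounded (range (\<lambda>n. nZ (\<lambda>x. complex_of_real (r n x)))) \<longrightarrow>
        (\<lambda>x. complex_of_real (F x)) \<in> Z \<and>
        (\<lambda>n. nZ (\<lambda>x. complex_of_real (r n x))) \<longlonglongrightarrow> nZ (\<lambda>x. complex_of_real (F x)))"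

end

theory Submission
  imports Defs
begin


lemma meas_ident_I11[measurable]: "(\<lambda>x::real. x) \<in> borel_measurable (lebesgue_on S)"
  using id_borel_measurable_lebesgue_on unfolding id_def .

lemma finite_I11: "finite_measure I11"
  by (rule finite_measure_lebesgue_on) simp

lemma integrable_const_I11[simp]: "integrable I11 (\<lambda>x. c::real)"
  using finite_measure.integrable_const[OF finite_I11] .

lemma sign_sum_identity:
  fixes c :: "nat \<Rightarrow> real"
  shows "(\<Sum>S\<in>Pow {..<m}. (\<Sum>i<m. (if i \<in> S then 1 else -1) * c i)^2) = 2^m * (\<Sum>i<m. (c i)^2)"
proof (induction m)
  case 0
  then show ?case by simp
next
  case (Suc m)
  let ?X = "\<lambda>S. (\<Sum>i<m. (if i \<in> S then 1 else -1) * c i)"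
  have PS: "Pow {..<Suc m} = Pow {..<m} \<union> insert m ` Pow {..<m}"
    by (simp add: lessThan_Suc Pow_insert)
  have disj: "Pow {..<m} \<inter> insert m ` Pow {..<m} = {}" by auto
  have inj: "inj_on (insert m) (Pow {..<m})"
    by (rule inj_onI) (metis Pow_iff insert_ident lessThan_iff less_irrefl subsetD)
  have e1: "(\<Sum>i<Suc m. (if i \<in> S then 1 else -1) * c i) = ?X S - c m" if "S \<in> Pow {..<m}" for S
    using that by auto
  have e2: "(\<Sum>i<Suc m. (if i \<in> insert m S then 1 else -1) * c i) = ?X S + c m" if "S \<in> Pow {..<m}" for S
  proof -
    have "(\<Sum>i<m. (if i \<in> insert m S then 1 else -1) * c i) = ?X S"
      by (rule sum.cong) auto
    then show ?thesis by simp
  qed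
  have "(\<Sum>S\<in>Pow {..<Suc m}. (\<Sum>i<Suc m. (if i \<in> S then 1 else -1) * c i)^2)
      = (\<Sum>S\<in>Pow {..<m}. (\<Sum>i<Suc m. (if i \<in> S then 1 else -1) * c i)^2)
        + (\<Sum>S\<in>insert m ` Pow {..<m}. (\<Sum>i<Suc m. (if i \<in> S then 1 else -1) * c i)^2)"
    unfolding PS by (rule sum.union_disjoint) (use disj in auto)
  also have "\<dots> = (\<Sum>S\<in>Pow {..<m}. (?X S - c m)^2) + (\<Sum>S\<in>Pow {..<m}. (?X S + c m)^2)"
  proof -
    have a: "(\<Sum>S\<in>Pow {..<m}. (\<Sum>i<Suc m. (if i \<in> S then 1 else -1) * c i)^2) = (\<Sum>S\<in>Pow {..<m}. (?X S - c m)^2)"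
      by (intro sum.cong refl) (simp only: e1)
    have b: "(\<Sum>S\<in>insert m ` Pow {..<m}. (\<Sum>i<Suc m. (if i \<in> S then 1 else -1) * c i)^2) = (\<Sum>S\<in>Pow {..<m}. (?X S + c m)^2)"
      unfolding sum.reindex[OF inj] o_def by (intro sum.cong refl) (simp only: e2)
    show ?thesis using a b by simp
  qed
  also have "\<dots> = (\<Sum>S\<in>Pow {..<m}. 2 * (?X S)^2 + 2 * (c m)^2)"
    by (simp add: sum.distrib[symmetric] power2_eq_square algebra_simps)
  also have "\<dots> = 2 * (\<Sum>S\<in>Pow {..<m}. (?X S)^2) + 2 * 2^m * (c m)^2"
    by (simp add: sum.distrib sum_distrib_left card_Pow)
  also have "\<dots> = 2^Suc m * (\<Sum>i<Suc m. (c i)^2)"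
    using Suc.IH by (simp add: algebra_simps)
  finally show ?case .
qed

definition cell :: "nat \<Rightarrow> nat \<Rightarrow> real set" where
  "cell m k = {-1 + real k / real m <.. -1 + real (Suc k) / real m}"

lemma cell_unique:
  assumes "m > 0" "x \<in> cell m k" "x \<in> cell m k'"
  shows "k = k'"
proof -
  have m: "real m > 0" using assms by simp
  have "real k < (x+1) * m" "(x+1) * m \<le> real k + 1"
       "real k' < (x+1) * m" "(x+1) * m \<le> real k' + 1"
    using assms(2,3) m by (auto simp: cell_def field_simps)
  then have "real k < real k' + 1" "real k' < real k + 1" by linarith+
  then show ?thesis by linarith
qed

lemma cell_cover:
  assumes "m > 0" "-1 < x" "x < 1"
  shows "\<exists>k<2*m. x \<in> cell m k"
proof -
  have m: "real m > 0" using assms by simp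
  define k where "k = nat (ceiling ((x+1) * m)) - 1"
  have pos: "(x+1) * m > 0" using assms m by simp
  then have c1: "ceiling ((x+1) * m) \<ge> 1" by (simp add: ceiling_less_iff le_ceiling_iff)
  have "ceiling ((x+1) * m) \<le> 2*m"
    using assms m by (simp add: ceiling_le_iff) 
  then have kl: "k < 2*m" using c1 unfolding k_def by linarith
  have kk0: "int k = ceiling ((x+1) * m) - 1" using c1 unfolding k_def by linarith
  have kk: "real k = real_of_int (ceiling ((x+1) * m)) - 1"
    by (metis kk0 of_int_1 of_int_diff of_int_of_nat_eq)
  have "real k < (x+1) * m" using kk ceiling_correct[of "(x+1)*m"] by linarith
  moreover have "(x+1) * m \<le> real k + 1" using kk le_of_int_ceiling[of "(x+1)*m"] by linarith
  ultimately have "x \<in> cell m k" using m by (simp add: cell_def field_simps)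
  with kl show ?thesis by blast
qed

lemma indicator_sum_le1:
  fixes C :: "nat \<Rightarrow> real set"
  assumes "\<And>i j. i \<in> A \<Longrightarrow> j \<in> A \<Longrightarrow> i \<noteq> j \<Longrightarrow> C i \<inter> C j = {}" "finite A"
  shows "(\<Sum>i\<in>A. indicator (C i) x :: real) \<le> 1"
proof (cases "\<exists>i\<in>A. x \<in> C i")
  case True
  then obtain i0 where i0: "i0 \<in> A" "x \<in> C i0" by blast
  have "(\<Sum>i\<in>A. indicator (C i) x :: real) = (\<Sum>i\<in>A. if i = i0 then 1 else 0)"
    by (rule sum.cong) (use assms(1) i0 in \<open>auto simp: indicator_def\<close>)
  also have "\<dots> = 1" using i0 assms(2) by simp
  finally show ?thesis by simp
next
  case False
  then show ?thesis by (simp add: indicator_def)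
qed



lemma fhilbert_local:
  assumes ut: "u < t" and tv: "t < v" and u1: "-1 \<le> u" and v1: "v \<le> 1"
    and g0: "\<And>x. u < x \<Longrightarrow> x < v \<Longrightarrow> g x = 0"
  shows "fhilbert g t = complex_of_real (1/pi) * integral\<^sup>L I11 (\<lambda>x. g x / complex_of_real (x - t))"
proof -
  define d where "d = min (t - u) (v - t)"
  have d: "d > 0" using ut tv by (simp add: d_def)
  let ?h = "\<lambda>x. g x / complex_of_real (x - t)"
  let ?c = "complex_of_real (1/pi) * integral\<^sup>L I11 ?h"
  have I: "integral\<^sup>L I11 ?h = integral\<^sup>L lebesgue (\<lambda>x. indicator {-1<..<1} x *\<^sub>R ?h x)"
    by (rule integral_restrict_space) simp
  have eq: "complex_of_real (1 / pi) *
        (LINT x : ({-1<..<t-\<epsilon>} \<union> {t+\<epsilon><..<1}) | lebesgue. ?h x) = ?c"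
    if e: "0 < \<epsilon>" "\<epsilon> < d" for \<epsilon>
  proof -
    have "(\<lambda>x. indicator ({-1<..<t-\<epsilon>} \<union> {t+\<epsilon><..<1}) x *\<^sub>R ?h x)
        = (\<lambda>x. indicator {-1<..<1} x *\<^sub>R ?h x)"
    proof (rule ext)
      fix x
      show "indicator ({-1<..<t-\<epsilon>} \<union> {t+\<epsilon><..<1}) x *\<^sub>R ?h x = indicator {-1<..<1} x *\<^sub>R ?h x"
      proof (cases "x \<in> {-1<..<t-\<epsilon>} \<union> {t+\<epsilon><..<1}")
        case True
        then have "x \<in> {-1<..<1}" using e ut tv u1 v1 unfolding d_def by auto
        with True show ?thesis by simp
      next
        case nA: False
        show ?thesis
        proof (cases "x \<in> {-1<..<1}")
          case xin: True
          have "t - \<epsilon> \<le> x" "x \<le> t + \<epsilon>" using xin nA by auto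
          then have "u < x" "x < v" using e unfolding d_def by auto
          then have "g x = 0" by (rule g0)
          then show ?thesis by simp
        next
          case F2: False
          with nA show ?thesis by simp
        qed
      qed
    qed
    then show ?thesis unfolding set_lebesgue_integral_def I by simp
  qed
  have ev: "eventually (\<lambda>\<epsilon>. complex_of_real (1 / pi) *
        (LINT x : ({-1<..<t-\<epsilon>} \<union> {t+\<epsilon><..<1}) | lebesgue. ?h x) = ?c) (at_right 0)"
    unfolding eventually_at_right_field using d eq by blast
  show ?thesis
    unfolding fhilbert_def
    by (rule tendsto_Lim) (simp, rule tendsto_eventually[OF ev])
qed

lemma measure_I11_Ioo:
  assumes "-1 \<le> u" "u \<le> v" "v \<le> 1"
  shows "measure I11 ({u<..<v} \<inter> space I11) = v - u"
proof -
  have "{u<..<v} \<inter> space I11 = {u<..<v}" using assms by auto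
  moreover have "measure I11 {u<..<v} = measure lebesgue {u<..<v}"
    by (rule measure_restrict_space) (use assms in auto)
  ultimately show ?thesis using assms by simp
qed

lemma integrable_ind_const_I11:
  "integrable I11 (\<lambda>t. indicator {u<..<v} t * (k::real))"
  by (rule finite_measure.integrable_const_bound[OF finite_I11, where B="\<bar>k\<bar>"]) (auto simp: indicator_def)

lemma arith1:
  fixes I g D :: real
  assumes "I \<le> - g / D" "D > 0"
  shows "(1/pi) * I \<le> - (g / (pi * D))"
proof -
  have "(1/pi) * I \<le> (1/pi) * (- g / D)" by (rule mult_left_mono[OF assms(1)]) simp
  also have "\<dots> = - (g / (pi * D))" by simp
  finally show ?thesis .
qed

lemma arith2:
  fixes I g D :: real
  assumes "g / D \<le> I" "D > 0"
  shows "g / (pi * D) \<le> (1/pi) * I"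
proof -
  have "(1/pi) * (g / D) \<le> (1/pi) * I" by (rule mult_left_mono[OF assms(1)]) simp
  moreover have "(1/pi) * (g / D) = g / (pi * D)" by simp
  ultimately show ?thesis by simp
qed

lemma hilbert_blocks:
  fixes F :: "real \<Rightarrow> real" and l r u v :: "nat \<Rightarrow> real"
  assumes Fm: "F \<in> borel_measurable I11" and Fnn: "\<And>x. 0 \<le> F x" and Fi: "integrable I11 F"
    and bound: "\<And>g. g \<in> borel_measurable I11 \<Longrightarrow> (\<And>x. cmod (g x) \<le> F x) \<Longrightarrow>
                   fhilbert g \<in> L2I \<and> L2norm (fhilbert g) \<le> B"
    and sub: "\<And>j. j<m \<Longrightarrow> -1 \<le> u j \<and> u j < v j \<and> v j \<le> 1"
    and Idisj: "\<And>i j. i<m \<Longrightarrow> j<m \<Longrightarrow> i \<noteq> j \<Longrightarrow> {l i<..r i} \<inter> {l j<..r j} = {}"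
    and Jdisj: "\<And>i j. i<m \<Longrightarrow> j<m \<Longrightarrow> i \<noteq> j \<Longrightarrow> {u i<..<v i} \<inter> {u j<..<v j} = {}"
    and IJ: "\<And>i j. i<m \<Longrightarrow> j<m \<Longrightarrow> {l i<..r i} \<inter> {u j<..<v j} = {}"
    and side: "\<And>j. j<m \<Longrightarrow> (r j \<le> u j \<and> v j - l j \<le> D) \<or> (v j \<le> l j \<and> r j - u j \<le> D)"
    and D: "D > 0"
  shows "(\<Sum>j<m. (v j - u j) * (integral\<^sup>L I11 (\<lambda>x. indicator {l j<..r j} x * F x) / (pi * D))^2) \<le> B^2"
proof -
  note Fm[measurable]
  define \<sigma> where "\<sigma> (S::nat set) (i::nat) = (if i \<in> S then 1 else -1 :: real)" for S i
  define G where "G S x = (\<Sum>i<m. \<sigma> S i * (indicator {l i<..r i} x * F x))" for S x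
  define g where "g S x = complex_of_real (G S x)" for S x
  define b where "b i t = (1/pi) * integral\<^sup>L I11 (\<lambda>x. indicator {l i<..r i} x * F x / (x - t))" for i t
  define \<gamma> where "\<gamma> j = integral\<^sup>L I11 (\<lambda>x. indicator {l j<..r j} x * F x)" for j
  define c where "c j = \<gamma> j / (pi * D)" for j
  define \<Phi> where "\<Phi> S t = (cmod (fhilbert (g S) t))^2" for S t
  let ?P = "Pow {..<m}"
  have gm: "g S \<in> borel_measurable I11" for S unfolding g_def G_def by measurable
  have gb: "cmod (g S x) \<le> F x" for S x
  proof -
    have "\<bar>G S x\<bar> \<le> (\<Sum>i<m. \<bar>\<sigma> S i * (indicator {l i<..r i} x * F x)\<bar>)" unfolding G_def by (rule sum_abs)
    also have "\<dots> = (\<Sum>i<m. indicator {l i<..r i} x * F x)"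
      by (rule sum.cong) (use Fnn[of x] in \<open>auto simp: \<sigma>_def abs_mult\<close>)
    also have "\<dots> = (\<Sum>i<m. indicator {l i<..r i} x) * F x"
      by (rule sum_distrib_right[symmetric])
    also have "\<dots> \<le> 1 * F x"
    proof (rule mult_right_mono[OF _ Fnn])
      show "(\<Sum>i<m. indicator {l i<..r i} x) \<le> (1::real)"
        by (rule indicator_sum_le1[where C="\<lambda>i. {l i<..r i}"]) (metis Idisj lessThan_iff, simp)
    qed
    finally show ?thesis unfolding g_def by simp
  qed
  have L2: "fhilbert (g S) \<in> L2I" "L2norm (fhilbert (g S)) \<le> B" for S using bound[OF gm gb] by auto
  have \<Phi>i: "integrable I11 (\<Phi> S)" for S using L2(1) unfolding L2I_def \<Phi>_def by auto
  have \<Phi>B: "integral\<^sup>L I11 (\<Phi> S) \<le> B^2" for S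
  proof -
    have n: "0 \<le> integral\<^sup>L I11 (\<Phi> S)" by (rule Bochner_Integration.integral_nonneg) (simp add: \<Phi>_def)
    have "sqrt (integral\<^sup>L I11 (\<Phi> S)) \<le> B" using L2(2)[of S] unfolding L2norm_def \<Phi>_def .
    then have "(sqrt (integral\<^sup>L I11 (\<Phi> S)))^2 \<le> B^2" by (rule power_mono) (simp add: n)
    with n show ?thesis by simp
  qed
  have pint: "integrable I11 (\<lambda>x. indicator {l i<..r i} x * F x / (x - t))"
    if "i<m" "j<m" "u j < t" "t < v j" for i j t
  proof -
    define d where "d = min (t - u j) (v j - t)"
    have d: "d > 0" using that unfolding d_def by simp
    show ?thesis
    proof (rule Bochner_Integration.integrable_bound[where f="\<lambda>x. F x / d"])
      show "integrable I11 (\<lambda>x. F x / d)" using Fi by simp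
      show "(\<lambda>x. indicator {l i<..r i} x * F x / (x - t)) \<in> borel_measurable I11" by measurable
      show "AE x in I11. norm (indicator {l i<..r i} x * F x / (x - t)) \<le> norm (F x / d)"
      proof (rule AE_I2)
        fix x
        show "norm (indicator {l i<..r i} x * F x / (x - t)) \<le> norm (F x / d)"
        proof (cases "x \<in> {l i<..r i}")
          case True
          have "x \<notin> {u j<..<v j}" using IJ[OF that(1,2)] True by auto
          then have xd: "\<bar>x - t\<bar> \<ge> d" unfolding d_def by auto
          have "F x / \<bar>x - t\<bar> \<le> F x / d"
            by (rule divide_left_mono[OF xd Fnn]) (use d xd in auto)
          then show ?thesis using True Fnn[of x] d by (simp add: abs_mult)
        next
          case False then show ?thesis using Fnn[of x] d by simp
        qed
      qed
    qed
  qed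
  have ij: "integrable I11 (\<lambda>x. indicator {l j<..r j} x * F x)" for j
    by (rule Bochner_Integration.integrable_bound[where f=F]) (use Fi Fnn in \<open>auto simp: indicator_def\<close>)
  have fval: "fhilbert (g S) t = complex_of_real (\<Sum>i<m. \<sigma> S i * b i t)"
    if "j<m" "u j < t" "t < v j" for S j t
  proof -
    have g0: "g S x = 0" if "u j < x" "x < v j" for x
    proof -
      have "x \<notin> {l i<..r i}" if "i<m" for i using IJ[OF that \<open>j<m\<close>] \<open>u j < x\<close> \<open>x < v j\<close> by auto
      then show ?thesis unfolding g_def G_def by simp
    qed
    have "fhilbert (g S) t = complex_of_real (1/pi) * integral\<^sup>L I11 (\<lambda>x. g S x / complex_of_real (x - t))"
      by (rule fhilbert_local[OF that(2,3)]) (use sub[OF that(1)] g0 in auto)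
    also have "(\<lambda>x. g S x / complex_of_real (x - t))
        = (\<lambda>x. complex_of_real (\<Sum>i<m. \<sigma> S i * (indicator {l i<..r i} x * F x / (x - t))))"
      unfolding g_def G_def by (auto simp: sum_divide_distrib)
    also have "integral\<^sup>L I11 \<dots> = complex_of_real (\<Sum>i<m. \<sigma> S i * integral\<^sup>L I11 (\<lambda>x. indicator {l i<..r i} x * F x / (x - t)))"
    proof -
      have "integral\<^sup>L I11 (\<lambda>x. \<Sum>i<m. \<sigma> S i * (indicator {l i<..r i} x * F x / (x - t)))
          = (\<Sum>i<m. integral\<^sup>L I11 (\<lambda>x. \<sigma> S i * (indicator {l i<..r i} x * F x / (x - t))))"
        by (rule Bochner_Integration.integral_sum, rule integrable_mult_right, rule pint[OF _ that], simp)
      also have "\<dots> = (\<Sum>i<m. \<sigma> S i * integral\<^sup>L I11 (\<lambda>x. indicator {l i<..r i} x * F x / (x - t)))"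
        by (intro sum.cong refl) (rule integral_mult_right_zero)
      finally have e2: "integral\<^sup>L I11 (\<lambda>x. \<Sum>i<m. \<sigma> S i * (indicator {l i<..r i} x * F x / (x - t)))
          = (\<Sum>i<m. \<sigma> S i * integral\<^sup>L I11 (\<lambda>x. indicator {l i<..r i} x * F x / (x - t)))" .
      show ?thesis unfolding integral_complex_of_real e2 ..
    qed
    finally have e: "fhilbert (g S) t = complex_of_real (1/pi) * complex_of_real (\<Sum>i<m. \<sigma> S i * integral\<^sup>L I11 (\<lambda>x. indicator {l i<..r i} x * F x / (x - t)))" .
    have hb: "(1/pi) * (\<Sum>i<m. \<sigma> S i * integral\<^sup>L I11 (\<lambda>x. indicator {l i<..r i} x * F x / (x - t))) = (\<Sum>i<m. \<sigma> S i * b i t)"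
      unfolding b_def sum_distrib_left by (intro sum.cong refl) simp
    show ?thesis unfolding e of_real_mult[symmetric] hb ..
  qed
  have blow: "(c j)^2 \<le> (b j t)^2" if "j<m" "u j < t" "t < v j" for j t
  proof -
    have \<gamma>nn: "\<gamma> j \<ge> 0" unfolding \<gamma>_def using Fnn by simp
    then have cnn: "c j \<ge> 0" unfolding c_def using D by simp
    from side[OF that(1)] show ?thesis
    proof
      assume s: "r j \<le> u j \<and> v j - l j \<le> D"
      have "integral\<^sup>L I11 (\<lambda>x. indicator {l j<..r j} x * F x / (x - t))
          \<le> integral\<^sup>L I11 (\<lambda>x. - (indicator {l j<..r j} x * F x) / D)"
      proof (rule Bochner_Integration.integral_mono)
        show "integrable I11 (\<lambda>x. indicator {l j<..r j} x * F x / (x - t))" by (rule pint[OF that(1) that])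
        show "integrable I11 (\<lambda>x. - (indicator {l j<..r j} x * F x) / D)" using ij[of j] by simp
        fix x
        show "indicator {l j<..r j} x * F x / (x - t) \<le> - (indicator {l j<..r j} x * F x) / D"
        proof (cases "x \<in> {l j<..r j}")
          case True
          have y: "0 < t - x" "t - x \<le> D" using True s that by auto
          have "F x / D \<le> F x / (t - x)" by (rule divide_left_mono[OF y(2) Fnn]) (use y in auto)
          moreover have "F x / (x - t) = - (F x / (t - x))" by (metis minus_diff_eq divide_minus_right)
          ultimately show ?thesis using True by simp
        next
          case False then show ?thesis by simp
        qed
      qed
      also have "\<dots> = - \<gamma> j / D" unfolding \<gamma>_def by simp
      finally have "b j t \<le> - c j" unfolding b_def c_def by (rule arith1[OF _ D])
      then show ?thesis using cnn power_mono[of "c j" "- b j t" 2] by simp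
    next
      assume s: "v j \<le> l j \<and> r j - u j \<le> D"
      have "integral\<^sup>L I11 (\<lambda>x. (indicator {l j<..r j} x * F x) / D)
          \<le> integral\<^sup>L I11 (\<lambda>x. indicator {l j<..r j} x * F x / (x - t))"
      proof (rule Bochner_Integration.integral_mono)
        show "integrable I11 (\<lambda>x. indicator {l j<..r j} x * F x / (x - t))" by (rule pint[OF that(1) that])
        show "integrable I11 (\<lambda>x. (indicator {l j<..r j} x * F x) / D)" using ij[of j] by simp
        fix x
        show "(indicator {l j<..r j} x * F x) / D \<le> indicator {l j<..r j} x * F x / (x - t)"
        proof (cases "x \<in> {l j<..r j}")
          case True
          have y: "0 < x - t" "x - t \<le> D" using True s that by auto
          have "F x / D \<le> F x / (x - t)" by (rule divide_left_mono[OF y(2) Fnn]) (use y in auto)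
          then show ?thesis using True by simp
        next
          case False then show ?thesis by simp
        qed
      qed
      moreover have "integral\<^sup>L I11 (\<lambda>x. (indicator {l j<..r j} x * F x) / D) = \<gamma> j / D" unfolding \<gamma>_def by simp
      ultimately have "\<gamma> j / D \<le> integral\<^sup>L I11 (\<lambda>x. indicator {l j<..r j} x * F x / (x - t))" by linarith
      then have "c j \<le> b j t" unfolding b_def c_def by (rule arith2[OF _ D])
      then show ?thesis using cnn by (simp add: power_mono)
    qed
  qed
  have sumPhi: "(\<Sum>S\<in>?P. \<Phi> S t) = 2^m * (\<Sum>i<m. (b i t)^2)" if "j<m" "u j < t" "t < v j" for j t
  proof -
    have "(\<Sum>S\<in>?P. \<Phi> S t) = (\<Sum>S\<in>?P. (\<Sum>i<m. (if i \<in> S then 1 else -1) * b i t)^2)"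
      by (rule sum.cong[OF refl]) (simp only: \<Phi>_def fval[OF that] norm_of_real power2_abs \<sigma>_def)
    also have "\<dots> = 2^m * (\<Sum>i<m. (b i t)^2)" by (rule sign_sum_identity)
    finally show ?thesis .
  qed
  have pw: "indicator {u j<..<v j} t * (2^m * (c j)^2) \<le> indicator {u j<..<v j} t * (\<Sum>S\<in>?P. \<Phi> S t)"
    if "j<m" for j t
  proof (cases "t \<in> {u j<..<v j}")
    case True
    then have tt: "u j < t" "t < v j" by auto
    have "(b j t)^2 \<le> (\<Sum>i<m. (b i t)^2)"
      by (rule member_le_sum) (use that in auto)
    then have "2^m * (c j)^2 \<le> 2^m * (\<Sum>i<m. (b i t)^2)"
      using blow[OF that tt] by simp
    then show ?thesis using True sumPhi[OF that tt] by simp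
  next
    case False then show ?thesis by simp
  qed
  have Pi: "integrable I11 (\<lambda>t. \<Sum>S\<in>?P. \<Phi> S t)" using \<Phi>i by auto
  have Pi2: "integrable I11 (\<lambda>t. indicator {u j<..<v j} t * (\<Sum>S\<in>?P. \<Phi> S t))" for j
  proof (rule Bochner_Integration.integrable_bound[OF Pi])
    note [measurable] = borel_measurable_integrable[OF Pi]
    show "(\<lambda>t. indicator {u j<..<v j} t * (\<Sum>S\<in>?P. \<Phi> S t)) \<in> borel_measurable I11" by measurable
    show "AE t in I11. norm (indicator {u j<..<v j} t * (\<Sum>S\<in>?P. \<Phi> S t)) \<le> norm (\<Sum>S\<in>?P. \<Phi> S t)"
      by (auto simp: indicator_def \<Phi>_def intro!: sum_nonneg)
  qed
  have "2^m * (\<Sum>j<m. (v j - u j) * (c j)^2)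
      = (\<Sum>j<m. integral\<^sup>L I11 (\<lambda>t. indicator {u j<..<v j} t * (2^m * (c j)^2)))"
  proof -
    have pj: "integral\<^sup>L I11 (\<lambda>t. indicator {u j<..<v j} t * (2^m * (c j)^2)) = 2^m * ((v j - u j) * (c j)^2)"
      if "j<m" for j
    proof -
      have "integral\<^sup>L I11 (\<lambda>t. indicator {u j<..<v j} t * (2^m * (c j)^2))
          = measure I11 ({u j<..<v j} \<inter> space I11) * (2^m * (c j)^2)"
        by (simp only: integral_mult_left_zero Bochner_Integration.integral_indicator)
      also have "\<dots> = (v j - u j) * (2^m * (c j)^2)"
        using measure_I11_Ioo[of "u j" "v j"] sub[OF that] by simp
      finally show ?thesis by simp
    qed
    show ?thesis unfolding sum_distrib_left by (intro sum.cong refl, rule pj[symmetric], simp)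
  qed
  also have "\<dots> \<le> (\<Sum>j<m. integral\<^sup>L I11 (\<lambda>t. indicator {u j<..<v j} t * (\<Sum>S\<in>?P. \<Phi> S t)))"
    by (intro sum_mono Bochner_Integration.integral_mono integrable_ind_const_I11 Pi2 pw) auto
  also have "\<dots> = integral\<^sup>L I11 (\<lambda>t. \<Sum>j<m. indicator {u j<..<v j} t * (\<Sum>S\<in>?P. \<Phi> S t))"
    by (rule Bochner_Integration.integral_sum[symmetric]) (use Pi2 in auto)
  also have "\<dots> \<le> integral\<^sup>L I11 (\<lambda>t. \<Sum>S\<in>?P. \<Phi> S t)"
  proof (rule Bochner_Integration.integral_mono)
    show "integrable I11 (\<lambda>t. \<Sum>j<m. indicator {u j<..<v j} t * (\<Sum>S\<in>?P. \<Phi> S t))"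
      by (rule Bochner_Integration.integrable_sum) (rule Pi2)
    show "integrable I11 (\<lambda>t. \<Sum>S\<in>?P. \<Phi> S t)" by (rule Pi)
    fix t
    have nn: "0 \<le> (\<Sum>S\<in>?P. \<Phi> S t)" by (auto simp: \<Phi>_def intro!: sum_nonneg)
    have "(\<Sum>j<m. indicator {u j<..<v j} t :: real) \<le> 1"
      by (rule indicator_sum_le1[where C="\<lambda>j. {u j<..<v j}"]) (metis Jdisj lessThan_iff, simp)
    then have "(\<Sum>j<m. indicator {u j<..<v j} t) * (\<Sum>S\<in>?P. \<Phi> S t) \<le> 1 * (\<Sum>S\<in>?P. \<Phi> S t)"
      by (rule mult_right_mono[OF _ nn])
    then show "(\<Sum>j<m. indicator {u j<..<v j} t * (\<Sum>S\<in>?P. \<Phi> S t)) \<le> (\<Sum>S\<in>?P. \<Phi> S t)"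
      by (simp add: sum_distrib_right)
  qed
  also have "\<dots> = (\<Sum>S\<in>?P. integral\<^sup>L I11 (\<Phi> S))"
    by (rule Bochner_Integration.integral_sum) (use \<Phi>i in auto)
  also have "\<dots> \<le> (\<Sum>S\<in>?P. B^2)" by (rule sum_mono) (rule \<Phi>B)
  also have "\<dots> = 2^m * B^2" by (simp add: card_Pow)
  finally have "2^m * (\<Sum>j<m. (v j - u j) * (c j)^2) \<le> 2^m * B^2" .
  then have "(\<Sum>j<m. (v j - u j) * (c j)^2) \<le> B^2" by simp
  then show ?thesis unfolding c_def \<gamma>_def .
qed



lemma sum_even_odd: "(\<Sum>k<2*(m::nat). h k) = (\<Sum>j<m. h (2*j)) + (\<Sum>j<m. (h (2*j+1) :: real))"
  by (induction m) (auto simp: mult_2)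

lemma cell_disjoint: "m > 0 \<Longrightarrow> k \<noteq> k' \<Longrightarrow> cell m k \<inter> cell m k' = {}"
  using cell_unique by blast

lemma grid_half:
  fixes F :: "real \<Rightarrow> real"
  assumes Fm: "F \<in> borel_measurable I11" and Fnn: "\<And>x. 0 \<le> F x" and Fi: "integrable I11 F"
    and bound: "\<And>g. g \<in> borel_measurable I11 \<Longrightarrow> (\<And>x. cmod (g x) \<le> F x) \<Longrightarrow>
                   fhilbert g \<in> L2I \<and> L2norm (fhilbert g) \<le> B"
    and m: "m > 0" and p: "p \<le> (1::nat)"
  shows "(\<Sum>j<m. (integral\<^sup>L I11 (\<lambda>x. indicator (cell m (2*j+p)) x * F x))^2) \<le> 4 * pi^2 * B^2 / m"
proof -
  define a where "a k = -1 + real k / real m" for k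
  define l where "l j = a (2*j+p)" for j
  define r where "r j = a (Suc (2*j+p))" for j
  define u where "u j = a (2*j+1-p)" for j
  define v where "v j = a (Suc (2*j+1-p))" for j
  define D where "D = 2 / real m"
  have mr: "real m > 0" using m by simp
  have aS: "a (Suc k) = a k + 1/m" for k unfolding a_def by (simp add: add_divide_distrib)
  have amono: "a k \<le> a k'" if "k \<le> k'" for k k' unfolding a_def using that mr by (simp add: divide_right_mono)
  have cellI: "{l j<..r j} = cell m (2*j+p)" for j unfolding l_def r_def a_def cell_def ..
  have cellJ: "{u j<..<v j} \<subseteq> cell m (2*j+1-p)" for j unfolding u_def v_def a_def cell_def by auto
  have a2m: "a (2*m) = 1" unfolding a_def using mr by simp
  have a0: "a 0 = -1" unfolding a_def by simp
  have "(\<Sum>j<m. (v j - u j) * (integral\<^sup>L I11 (\<lambda>x. indicator {l j<..r j} x * F x) / (pi * D))^2) \<le> B^2"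
  proof (rule hilbert_blocks[OF Fm Fnn Fi bound])
    show "-1 \<le> u j \<and> u j < v j \<and> v j \<le> 1" if "j < m" for j
    proof -
      have "a 0 \<le> u j" unfolding u_def by (rule amono) simp
      moreover have "v j \<le> a (2*m)" unfolding v_def by (rule amono) (use that p in simp)
      moreover have "u j < v j" unfolding u_def v_def aS using mr by simp
      ultimately show ?thesis using a0 a2m by simp
    qed
    show "{l i<..r i} \<inter> {l j<..r j} = {}" if "i<m" "j<m" "i \<noteq> j" for i j
      unfolding cellI by (rule cell_disjoint[OF m]) (use that in simp)
    show "{u i<..<v i} \<inter> {u j<..<v j} = {}" if "i<m" "j<m" "i \<noteq> j" for i j
    proof -
      have "cell m (2*i+1-p) \<inter> cell m (2*j+1-p) = {}" by (rule cell_disjoint[OF m]) (use that p in simp)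
      then show ?thesis using cellJ[of i] cellJ[of j] by blast
    qed
    show "{l i<..r i} \<inter> {u j<..<v j} = {}" if "i<m" "j<m" for i j
    proof -
      have "2*i+p \<noteq> 2*j+1-p" using p by presburger
      then have "cell m (2*i+p) \<inter> cell m (2*j+1-p) = {}" by (rule cell_disjoint[OF m])
      then show ?thesis using cellJ[of j] cellI[of i] by blast
    qed
    show "(r j \<le> u j \<and> v j - l j \<le> D) \<or> (v j \<le> l j \<and> r j - u j \<le> D)" if "j<m" for j
    proof (cases "p = 0")
      case True
      then show ?thesis by (simp add: l_def r_def u_def v_def D_def aS)
    next
      case False
      then have p1: "p = 1" using p by simp
      then show ?thesis by (simp add: l_def r_def u_def v_def D_def aS)
    qed
    show "D > 0" unfolding D_def using mr by simp
  qed
  moreover have "(v j - u j) * (x / (pi * D))^2 = x^2 * (m / (4 * pi^2))" for j x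
  proof -
    have "v j - u j = 1/m" unfolding u_def v_def aS by simp
    then show ?thesis unfolding D_def using mr by (simp add: field_simps power2_eq_square)
  qed
  ultimately have "(\<Sum>j<m. (integral\<^sup>L I11 (\<lambda>x. indicator (cell m (2*j+p)) x * F x))^2 * (m / (4 * pi^2))) \<le> B^2"
    unfolding cellI by simp
  then have "(\<Sum>j<m. (integral\<^sup>L I11 (\<lambda>x. indicator (cell m (2*j+p)) x * F x))^2) * (m / (4 * pi^2)) \<le> B^2"
    unfolding sum_distrib_right .
  then show ?thesis using mr by (simp add: field_simps)
qed



lemma cell_sum_one:
  assumes "m > 0" "-1 < x" "x < 1"
  shows "(\<Sum>k<2*m. indicator (cell m k) x :: real) = 1"
proof -
  obtain k0 where k0: "k0 < 2*m" "x \<in> cell m k0" using cell_cover[OF assms] by blast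
  have "(\<Sum>k<2*m. indicator (cell m k) x :: real) = (\<Sum>k<2*m. if k = k0 then 1 else 0)"
  proof (rule sum.cong[OF refl])
    fix k assume "k \<in> {..<2*m}"
    show "indicator (cell m k) x = (if k = k0 then 1 else (0::real))"
    proof (cases "k = k0")
      case True then show ?thesis using k0 by simp
    next
      case False
      then have "x \<notin> cell m k" using cell_unique[OF assms(1) k0(2)] by blast
      then show ?thesis using False by simp
    qed
  qed
  also have "\<dots> = 1" using k0 by simp
  finally show ?thesis .
qed

lemma cell_decomp:
  fixes \<phi> :: "real \<Rightarrow> real"
  assumes "m > 0" "integrable I11 \<phi>"
  shows "integral\<^sup>L I11 \<phi> = (\<Sum>k<2*m. integral\<^sup>L I11 (\<lambda>x. indicator (cell m k) x * \<phi> x))"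
proof -
  note [measurable] = borel_measurable_integrable[OF assms(2)]
  have i: "integrable I11 (\<lambda>x. indicator (cell m k) x * \<phi> x)" for k
  proof (rule Bochner_Integration.integrable_bound[OF assms(2)])
    show "(\<lambda>x. indicator (cell m k) x * \<phi> x) \<in> borel_measurable I11" unfolding cell_def by measurable
    show "AE x in I11. norm (indicator (cell m k) x * \<phi> x) \<le> norm (\<phi> x)"
      by (rule AE_I2) (simp add: indicator_def)
  qed
  have "integral\<^sup>L I11 \<phi> = integral\<^sup>L I11 (\<lambda>x. \<Sum>k<2*m. indicator (cell m k) x * \<phi> x)"
  proof (rule Bochner_Integration.integral_cong[OF refl])
    fix x assume "x \<in> space I11"
    then have "-1 < x" "x < 1" by auto
    then have "(\<Sum>k<2*m. indicator (cell m k) x * \<phi> x) = 1 * \<phi> x"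
      unfolding sum_distrib_right[symmetric] using cell_sum_one[OF assms(1)] by simp
    then show "\<phi> x = (\<Sum>k<2*m. indicator (cell m k) x * \<phi> x)" by simp
  qed
  also have "\<dots> = (\<Sum>k<2*m. integral\<^sup>L I11 (\<lambda>x. indicator (cell m k) x * \<phi> x))"
    by (rule Bochner_Integration.integral_sum) (rule i)
  finally show ?thesis .
qed

lemma cell_measure:
  assumes m: "m > 0" and k: "k < 2*m"
  shows "integral\<^sup>L I11 (\<lambda>x. indicator (cell m k) x * c) = c / m"
proof -
  define a where "a = -1 + real k / real m"
  define b where "b = -1 + real (Suc k) / real m"
  have mr: "real m > 0" using m by simp
  have ab: "b - a = 1/m" unfolding a_def b_def by (simp add: add_divide_distrib)
  have a1: "-1 \<le> a" unfolding a_def using mr by simp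
  have b1: "b \<le> 1" unfolding b_def using mr k by (simp add: field_simps)
  have c: "cell m k = {a<..b}" unfolding cell_def a_def b_def ..
  have ableb: "a \<le> b" unfolding a_def b_def using mr by (simp add: divide_right_mono)
  have "measure I11 (cell m k \<inter> space I11) = 1/m"
  proof (cases "b < 1")
    case True
    then have "cell m k \<inter> space I11 = {a<..b}" using a1 c by auto
    moreover have "measure I11 {a<..b} = measure lebesgue {a<..b}"
      by (rule measure_restrict_space) (use a1 True in auto)
    ultimately show ?thesis using ab a1 True ableb by simp
  next
    case False
    then have "cell m k \<inter> space I11 = {a<..<b}" using a1 b1 c by auto
    moreover have "measure I11 {a<..<b} = measure lebesgue {a<..<b}"
      by (rule measure_restrict_space) (use a1 b1 in auto)
    ultimately show ?thesis using ab a1 ableb by simp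
  qed
  then show ?thesis
    by (simp only: integral_mult_left_zero Bochner_Integration.integral_indicator) simp
qed



lemma cont_approx:
  fixes H :: "real \<Rightarrow> real"
  assumes Hm: "H \<in> borel_measurable I11" and H: "\<And>x. 0 \<le> H x \<and> H x \<le> M" and e: "e > 0"
  shows "\<exists>G. continuous_on UNIV G \<and> (\<forall>x. 0 \<le> G x \<and> G x \<le> M) \<and> integral\<^sup>L I11 (\<lambda>x. \<bar>G x - H x\<bar>) < e"
proof -
  have M0: "0 \<le> M" using H[of 0] by linarith
  have "H measurable_on {-1<..<1}"
    using measurable_on_iff_borel_measurable[of "{-1<..<1::real}" H] Hm by simp
  then obtain N g where N: "negligible N" and gc: "\<And>n. continuous_on UNIV (g n)"
      and gl: "\<And>x. x \<notin> N \<Longrightarrow> (\<lambda>n. g n x) \<longlonglongrightarrow> (if x \<in> {-1<..<1} then H x else 0)"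
    unfolding measurable_on_def by blast
  define G where "G n x = max 0 (min M (g n x))" for n x
  have Gc: "continuous_on UNIV (G n)" for n unfolding G_def by (intro continuous_intros gc)
  have GM: "0 \<le> G n x \<and> G n x \<le> M" for n x unfolding G_def using M0 by simp
  have Gm: "G n \<in> borel_measurable I11" for n
    by (rule continuous_imp_measurable_on_sets_lebesgue) (auto intro: continuous_on_subset[OF Gc])
  have lim: "(\<lambda>n. \<bar>G n x - H x\<bar>) \<longlonglongrightarrow> 0" if "x \<notin> N" "x \<in> {-1<..<1}" for x
  proof -
    have "(\<lambda>n. g n x) \<longlonglongrightarrow> H x" using gl[OF that(1)] that(2) by simp
    then have "(\<lambda>n. G n x) \<longlonglongrightarrow> max 0 (min M (H x))" unfolding G_def
      by (intro tendsto_max tendsto_min tendsto_const)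
    moreover have "max 0 (min M (H x)) = H x" using H[of x] by simp
    ultimately have "(\<lambda>n. G n x - H x) \<longlonglongrightarrow> 0" using LIM_zero by fastforce
    then show ?thesis by (rule tendsto_rabs_zero)
  qed
  have Nn: "N \<in> null_sets lebesgue" using N negligible_iff_null_sets by blast
  have AEN: "AE x in I11. x \<notin> N"
  proof -
    have "AE x in lebesgue. x \<notin> N" using AE_not_in[OF Nn] .
    then have "AE x in lebesgue. x \<in> {-1<..<1} \<longrightarrow> x \<notin> N" by (rule AE_mp) simp
    then show ?thesis by (subst AE_restrict_space_iff) simp_all
  qed
  have AElim: "AE x in I11. (\<lambda>n. \<bar>G n x - H x\<bar>) \<longlonglongrightarrow> 0"
    using AEN by (rule AE_mp) (rule AE_I2, use lim in auto)
  have conv: "(\<lambda>n. integral\<^sup>L I11 (\<lambda>x. \<bar>G n x - H x\<bar>)) \<longlonglongrightarrow> integral\<^sup>L I11 (\<lambda>x. 0::real)"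
  proof (rule integral_dominated_convergence[where w="\<lambda>x. M"])
    show "(\<lambda>x. 0::real) \<in> borel_measurable I11" by simp
    show "(\<lambda>x. \<bar>G n x - H x\<bar>) \<in> borel_measurable I11" for n
      using Gm[of n] Hm by measurable
    show "integrable I11 (\<lambda>x. M)" by simp
    show "AE x in I11. (\<lambda>n. \<bar>G n x - H x\<bar>) \<longlonglongrightarrow> 0" by (rule AElim)
    show "AE x in I11. norm \<bar>G n x - H x\<bar> \<le> M" for n
    proof (rule AE_I2)
      fix x show "norm \<bar>G n x - H x\<bar> \<le> M" using GM[of n x] H[of x] by (simp add: abs_le_iff)
    qed
  qed
  then have "(\<lambda>n. integral\<^sup>L I11 (\<lambda>x. \<bar>G n x - H x\<bar>)) \<longlonglongrightarrow> 0" by simp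
  then have "eventually (\<lambda>n. integral\<^sup>L I11 (\<lambda>x. \<bar>G n x - H x\<bar>) < e) sequentially"
    using e by (rule order_tendstoD(2))
  then obtain n where "integral\<^sup>L I11 (\<lambda>x. \<bar>G n x - H x\<bar>) < e"
    by (auto dest: eventually_happens)
  then show ?thesis using Gc GM by blast
qed



lemma cell_diam:
  assumes "m > 0" "x \<in> cell m k" "y \<in> cell m k"
  shows "\<bar>x - y\<bar> \<le> 1 / real m"
proof -
  have e: "-1 + real (Suc k) / real m = (-1 + real k / real m) + 1 / real m"
    by (simp add: add_divide_distrib)
  show ?thesis using assms(2,3) unfolding cell_def e by auto
qed

lemma integrable_bounded_I11:
  fixes f :: "real \<Rightarrow> real"
  assumes "f \<in> borel_measurable I11" "\<And>x. \<bar>f x\<bar> \<le> B"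
  shows "integrable I11 f"
  by (rule finite_measure.integrable_const_bound[OF finite_I11, where B=B]) (use assms in auto)

lemma trunc_estimate:
  fixes F H G :: "real \<Rightarrow> real"
  assumes Fm: "F \<in> borel_measurable I11" and Fnn: "\<And>x. 0 \<le> F x" and Fi: "integrable I11 F"
    and m: "m > 0"
    and grid: "(\<Sum>k<2*m. (integral\<^sup>L I11 (\<lambda>x. indicator (cell m k) x * F x))^2) \<le> K / m"
    and Hm: "H \<in> borel_measurable I11" and H: "\<And>x. 0 \<le> H x \<and> H x \<le> M" and HF: "\<And>x. H x \<le> F x"
    and Gc: "continuous_on UNIV G" and G: "\<And>x. 0 \<le> G x \<and> G x \<le> M"
    and unif: "\<And>x y. x \<in> {-1..1} \<Longrightarrow> y \<in> {-1..1} \<Longrightarrow> \<bar>x - y\<bar> \<le> 1/m \<Longrightarrow> \<bar>G x - G y\<bar> \<le> \<omega>"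
    and om: "\<omega> \<ge> 0"
    and close: "integral\<^sup>L I11 (\<lambda>x. \<bar>G x - H x\<bar>) \<le> \<eta>"
  shows "integral\<^sup>L I11 (\<lambda>x. (H x)^2) \<le> K + 4*M*\<eta> + 4*M*\<omega> + 2*\<omega>^2"
proof -
  note Fm[measurable] Hm[measurable]
  have Gm[measurable]: "G \<in> borel_measurable I11"
    by (rule continuous_imp_measurable_on_sets_lebesgue) (auto intro: continuous_on_subset[OF Gc])
  have mr: "real m > 0" using m by simp
  have M0: "0 \<le> M" using H[of 0] by linarith
  define ind where "ind k x = (indicator (cell m k) x :: real)" for k x
  have indm[measurable]: "(\<lambda>x. ind k x) \<in> borel_measurable I11" for k unfolding ind_def cell_def by measurable
  have ind01: "0 \<le> ind k x" "ind k x \<le> 1" for k x unfolding ind_def by (auto simp: indicator_def)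
  define \<alpha> where "\<alpha> k = integral\<^sup>L I11 (\<lambda>x. ind k x * G x)" for k
  define \<beta> where "\<beta> k = integral\<^sup>L I11 (\<lambda>x. ind k x * H x)" for k
  define \<gamma> where "\<gamma> k = integral\<^sup>L I11 (\<lambda>x. ind k x * F x)" for k
  define \<rho> where "\<rho> k = integral\<^sup>L I11 (\<lambda>x. ind k x * \<bar>G x - H x\<bar>)" for k
  have indi: "integrable I11 (\<lambda>x. ind k x * f x)" if fi: "integrable I11 f" for k and f :: "real \<Rightarrow> real"
  proof (rule Bochner_Integration.integrable_bound[OF fi])
    note [measurable] = borel_measurable_integrable[OF fi]
    show "(\<lambda>x. ind k x * f x) \<in> borel_measurable I11" by measurable
    show "AE x in I11. norm (ind k x * f x) \<le> norm (f x)"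
      by (rule AE_I2) (simp add: ind_def indicator_def)
  qed
  have Gi: "integrable I11 G" by (rule integrable_bounded_I11[where B=M]) (use G in auto)
  have G2i: "integrable I11 (\<lambda>x. (G x)^2)"
  proof (rule integrable_bounded_I11[where B="M^2"])
    show "(\<lambda>x. (G x)^2) \<in> borel_measurable I11" by measurable
    fix x show "\<bar>(G x)^2\<bar> \<le> M^2" using G[of x] by (simp add: power_mono)
  qed
  have Hi: "integrable I11 H" by (rule integrable_bounded_I11[where B=M]) (use H in auto)
  have H2i: "integrable I11 (\<lambda>x. (H x)^2)"
  proof (rule integrable_bounded_I11[where B="M^2"])
    show "(\<lambda>x. (H x)^2) \<in> borel_measurable I11" by measurable
    fix x show "\<bar>(H x)^2\<bar> \<le> M^2" using H[of x] by (simp add: power_mono)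
  qed
  have Di: "integrable I11 (\<lambda>x. \<bar>G x - H x\<bar>)"
  proof (rule integrable_bounded_I11[where B="M"])
    show "(\<lambda>x. \<bar>G x - H x\<bar>) \<in> borel_measurable I11" by measurable
    fix x show "\<bar>\<bar>G x - H x\<bar>\<bar> \<le> M" using G[of x] H[of x] by (simp add: abs_le_iff)
  qed
  have cm: "integral\<^sup>L I11 (\<lambda>x. ind k x * c) = c / m" if "k < 2*m" for k c
    unfolding ind_def by (rule cell_measure[OF m that])
  have Gup: "G x \<le> m * \<alpha> k + \<omega>" if k: "k < 2*m" and x: "x \<in> cell m k" "x \<in> space I11" for k x
  proof -
    have "integral\<^sup>L I11 (\<lambda>y. ind k y * (G x - \<omega>)) \<le> \<alpha> k"
      unfolding \<alpha>_def
    proof (rule Bochner_Integration.integral_mono)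
      show "integrable I11 (\<lambda>y. ind k y * (G x - \<omega>))" by (rule indi) simp
      show "integrable I11 (\<lambda>y. ind k y * G y)" by (rule indi[OF Gi])
      fix y assume y: "y \<in> space I11"
      show "ind k y * (G x - \<omega>) \<le> ind k y * G y"
      proof (cases "y \<in> cell m k")
        case True
        have "\<bar>G x - G y\<bar> \<le> \<omega>"
          by (rule unif) (use x y cell_diam[OF m x(1) True] in auto)
        then show ?thesis using True by (simp add: ind_def)
      next
        case False then show ?thesis by (simp add: ind_def)
      qed
    qed
    then have "(G x - \<omega>) / m \<le> \<alpha> k" using cm[OF k] by simp
    then have "G x - \<omega> \<le> m * \<alpha> k" using mr by (simp add: divide_le_eq mult.commute)
    then show ?thesis by simp
  qed
  have \<alpha>nn: "0 \<le> \<alpha> k" for k unfolding \<alpha>_def using G ind01 by simp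
  have \<beta>nn: "0 \<le> \<beta> k" for k unfolding \<beta>_def using H ind01 by simp
  have \<alpha>M: "\<alpha> k \<le> M / m" if "k < 2*m" for k
  proof -
    have "\<alpha> k \<le> integral\<^sup>L I11 (\<lambda>x. ind k x * M)" unfolding \<alpha>_def
      by (rule Bochner_Integration.integral_mono[OF indi[OF Gi] indi]) (use G ind01 in \<open>auto intro: mult_left_mono\<close>)
    then show ?thesis using cm[OF that] by simp
  qed
  have \<beta>M: "\<beta> k \<le> M / m" if "k < 2*m" for k
  proof -
    have "\<beta> k \<le> integral\<^sup>L I11 (\<lambda>x. ind k x * M)" unfolding \<beta>_def
      by (rule Bochner_Integration.integral_mono[OF indi[OF Hi] indi]) (use H ind01 in \<open>auto intro: mult_left_mono\<close>)
    then show ?thesis using cm[OF that] by simp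
  qed
  have \<beta>\<gamma>: "\<beta> k \<le> \<gamma> k" for k unfolding \<beta>_def \<gamma>_def
    by (rule Bochner_Integration.integral_mono[OF indi[OF Hi] indi[OF Fi]]) (use HF ind01 in \<open>auto intro: mult_left_mono\<close>)
  have \<alpha>\<beta>: "\<bar>\<alpha> k - \<beta> k\<bar> \<le> \<rho> k" for k
  proof -
    have "\<alpha> k - \<beta> k = integral\<^sup>L I11 (\<lambda>x. ind k x * G x - ind k x * H x)"
      unfolding \<alpha>_def \<beta>_def by (rule Bochner_Integration.integral_diff[OF indi[OF Gi] indi[OF Hi], symmetric])
    also have "\<bar>\<dots>\<bar> \<le> integral\<^sup>L I11 (\<lambda>x. \<bar>ind k x * G x - ind k x * H x\<bar>)"
      by (rule integral_abs_bound)
    also have "\<dots> = \<rho> k" unfolding \<rho>_def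
      by (rule Bochner_Integration.integral_cong[OF refl]) (use ind01 in \<open>simp add: abs_mult right_diff_distrib[symmetric]\<close>)
    finally show ?thesis .
  qed
  have cellG2: "integral\<^sup>L I11 (\<lambda>x. ind k x * (G x)^2) \<le> m * (\<gamma> k)^2 + 2*M*\<rho> k + (2*\<omega>*M + \<omega>^2) / m"
    if k: "k < 2*m" for k
  proof -
    have "integral\<^sup>L I11 (\<lambda>x. ind k x * (G x)^2) \<le> integral\<^sup>L I11 (\<lambda>x. ind k x * (m * \<alpha> k + \<omega>)^2)"
    proof (rule Bochner_Integration.integral_mono[OF indi[OF G2i] indi])
      fix x assume x: "x \<in> space I11"
      show "ind k x * (G x)^2 \<le> ind k x * (m * \<alpha> k + \<omega>)^2"
      proof (cases "x \<in> cell m k")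
        case True
        have "G x \<le> m * \<alpha> k + \<omega>" by (rule Gup[OF k True x])
        then have "(G x)^2 \<le> (m * \<alpha> k + \<omega>)^2" using G[of x] by (simp add: power_mono)
        then show ?thesis using True by (simp add: ind_def)
      next
        case False then show ?thesis by (simp add: ind_def)
      qed
    qed simp
    also have "\<dots> = (m * \<alpha> k + \<omega>)^2 / m" by (rule cm[OF k])
    also have "\<dots> = m * (\<alpha> k)^2 + 2 * \<omega> * \<alpha> k + \<omega>^2 / m"
      using mr by (simp add: power2_eq_square field_simps)
    also have "\<dots> \<le> (m * (\<beta> k)^2 + 2*M*\<rho> k) + 2 * \<omega> * (M/m) + \<omega>^2 / m"
    proof -
      have "(\<alpha> k)^2 - (\<beta> k)^2 = (\<alpha> k - \<beta> k) * (\<alpha> k + \<beta> k)" by (simp add: power2_eq_square algebra_simps)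
      also have "\<dots> \<le> \<bar>\<alpha> k - \<beta> k\<bar> * (\<alpha> k + \<beta> k)"
        using \<alpha>nn[of k] \<beta>nn[of k] by (intro mult_right_mono) auto
      also have "\<dots> \<le> \<rho> k * (2 * M / m)"
        using \<alpha>\<beta>[of k] \<alpha>M[OF k] \<beta>M[OF k] \<alpha>nn[of k] \<beta>nn[of k]
        by (intro mult_mono) auto
      finally have "(\<alpha> k)^2 - (\<beta> k)^2 \<le> \<rho> k * (2 * M / m)" .
      then have "m * ((\<alpha> k)^2 - (\<beta> k)^2) \<le> m * (\<rho> k * (2 * M / m))"
        using mr by (intro mult_left_mono) auto
      then have a: "m * (\<alpha> k)^2 \<le> m * (\<beta> k)^2 + 2*M*\<rho> k"
        using mr by (simp add: algebra_simps)
      have b: "2 * \<omega> * \<alpha> k \<le> 2 * \<omega> * (M/m)" using mult_left_mono[OF \<alpha>M[OF k], of "2*\<omega>"] om by simp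
      show ?thesis using a b by linarith
    qed
    also have "\<dots> \<le> m * (\<gamma> k)^2 + 2*M*\<rho> k + (2*\<omega>*M + \<omega>^2) / m"
    proof -
      have "(\<beta> k)^2 \<le> (\<gamma> k)^2" using \<beta>\<gamma>[of k] \<beta>nn[of k] by (simp add: power_mono)
      then have "m * (\<beta> k)^2 \<le> m * (\<gamma> k)^2" using mr by simp
      moreover have "2 * \<omega> * (M/m) + \<omega>^2 / m = (2*\<omega>*M + \<omega>^2) / m" by (simp add: add_divide_distrib)
      ultimately show ?thesis by linarith
    qed
    finally show ?thesis .
  qed
  have "integral\<^sup>L I11 (\<lambda>x. (G x)^2) = (\<Sum>k<2*m. integral\<^sup>L I11 (\<lambda>x. ind k x * (G x)^2))"
    unfolding ind_def by (rule cell_decomp[OF m G2i])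
  also have "\<dots> \<le> (\<Sum>k<2*m. m * (\<gamma> k)^2 + 2*M*\<rho> k + (2*\<omega>*M + \<omega>^2) / m)"
    by (rule sum_mono) (use cellG2 in auto)
  also have "\<dots> = m * (\<Sum>k<2*m. (\<gamma> k)^2) + 2*M*(\<Sum>k<2*m. \<rho> k) + 2*(2*\<omega>*M + \<omega>^2)"
    using mr by (simp add: sum.distrib sum_distrib_left)
  also have "\<dots> \<le> K + 2*M*\<eta> + 2*(2*\<omega>*M + \<omega>^2)"
  proof -
    have "m * (\<Sum>k<2*m. (\<gamma> k)^2) \<le> m * (K / m)"
      using grid mr unfolding \<gamma>_def ind_def by (intro mult_left_mono) auto
    then have a: "m * (\<Sum>k<2*m. (\<gamma> k)^2) \<le> K" using mr by simp
    have "(\<Sum>k<2*m. \<rho> k) = integral\<^sup>L I11 (\<lambda>x. \<bar>G x - H x\<bar>)"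
      unfolding \<rho>_def ind_def by (rule cell_decomp[OF m Di, symmetric])
    then have "(\<Sum>k<2*m. \<rho> k) \<le> \<eta>" using close by simp
    then have b: "2*M*(\<Sum>k<2*m. \<rho> k) \<le> 2*M*\<eta>" using M0 by (simp add: mult_left_mono)
    show ?thesis using a b by linarith
  qed
  finally have G2: "integral\<^sup>L I11 (\<lambda>x. (G x)^2) \<le> K + 2*M*\<eta> + 2*(2*\<omega>*M + \<omega>^2)" .
  have "integral\<^sup>L I11 (\<lambda>x. (H x)^2) \<le> integral\<^sup>L I11 (\<lambda>x. (G x)^2 + 2*M*\<bar>G x - H x\<bar>)"
  proof (rule Bochner_Integration.integral_mono[OF H2i])
    show "integrable I11 (\<lambda>x. (G x)^2 + 2*M*\<bar>G x - H x\<bar>)" using G2i Di by simp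
    fix x
    have "(H x)^2 - (G x)^2 = (H x - G x) * (H x + G x)" by (simp add: power2_eq_square algebra_simps)
    also have "\<dots> \<le> \<bar>G x - H x\<bar> * (2*M)"
      using G[of x] H[of x] by (intro mult_mono) auto
    finally show "(H x)^2 \<le> (G x)^2 + 2*M*\<bar>G x - H x\<bar>" by (simp add: algebra_simps)
  qed
  also have "\<dots> = integral\<^sup>L I11 (\<lambda>x. (G x)^2) + 2*M*integral\<^sup>L I11 (\<lambda>x. \<bar>G x - H x\<bar>)"
    using G2i Di by simp
  also have "\<dots> \<le> (K + 2*M*\<eta> + 2*(2*\<omega>*M + \<omega>^2)) + 2*M*\<eta>"
    using G2 close M0 by (intro add_mono mult_left_mono) auto
  finally show ?thesis by (simp add: algebra_simps)
qed



lemma L2_from_grid: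
  fixes F :: "real \<Rightarrow> real"
  assumes Fm: "F \<in> borel_measurable I11" and Fnn: "\<And>x. 0 \<le> F x" and Fi: "integrable I11 F"
    and grid: "\<And>m. m > 0 \<Longrightarrow> (\<Sum>k<2*m. (integral\<^sup>L I11 (\<lambda>x. indicator (cell m k) x * F x))^2) \<le> K / m"
  shows "integrable I11 (\<lambda>x. (F x)^2)"
proof -
  note Fm[measurable]
  have trunc: "integral\<^sup>L I11 (\<lambda>x. (min (F x) M)^2) \<le> K" if M0: "M \<ge> 0" for M
  proof (rule field_le_epsilon)
    fix e :: real assume e: "e > 0"
    define H where "H x = min (F x) M" for x
    have Hm: "H \<in> borel_measurable I11" unfolding H_def by measurable
    have H: "0 \<le> H x \<and> H x \<le> M" for x unfolding H_def using Fnn[of x] M0 by simp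
    have HF: "H x \<le> F x" for x unfolding H_def by simp
    define \<omega> where "\<omega> = min 1 (e / (10*(M+1)))"
    have om: "\<omega> > 0" "\<omega> \<le> 1" "\<omega> \<le> e / (10*(M+1))" unfolding \<omega>_def using e M0 by auto
    obtain G where Gc: "continuous_on UNIV G" and G: "\<And>x. 0 \<le> G x \<and> G x \<le> M"
      and close: "integral\<^sup>L I11 (\<lambda>x. \<bar>G x - H x\<bar>) < \<omega>"
      using cont_approx[OF Hm H om(1)] by blast
    have "uniformly_continuous_on {-1..1} G"
      by (rule compact_uniformly_continuous) (auto intro: continuous_on_subset[OF Gc])
    then obtain d where d: "d > 0" and dG: "\<And>x x'. x \<in> {-1..1} \<Longrightarrow> x' \<in> {-1..1} \<Longrightarrow> dist x' x < d \<Longrightarrow> dist (G x') (G x) < \<omega>"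
      unfolding uniformly_continuous_on_def using om(1) by metis
    define m where "m = nat (ceiling (1/d)) + 1"
    have m: "m > 0" unfolding m_def by simp
    have "real m > 1/d" unfolding m_def by linarith
    then have md: "1 / real m < d" using d m by (simp add: field_simps)
    have unif: "\<bar>G x - G y\<bar> \<le> \<omega>" if "x \<in> {-1..1}" "y \<in> {-1..1}" "\<bar>x - y\<bar> \<le> 1/m" for x y
    proof -
      have "dist x y < d" using that(3) md by (simp add: dist_real_def)
      then have "dist (G x) (G y) < \<omega>" using dG[OF that(2,1)] by simp
      then show ?thesis by (simp add: dist_real_def)
    qed
    have "integral\<^sup>L I11 (\<lambda>x. (H x)^2) \<le> K + 4*M*\<omega> + 4*M*\<omega> + 2*\<omega>^2"
      by (rule trunc_estimate[OF Fm Fnn Fi m grid[OF m] Hm H HF Gc G unif]) (use om close in auto)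
    also have "\<dots> \<le> K + e"
    proof -
      have "\<omega>^2 \<le> \<omega>" using mult_right_mono[OF om(2), of \<omega>] om(1) by (simp add: power2_eq_square)
      then have "4*M*\<omega> + 4*M*\<omega> + 2*\<omega>^2 \<le> (8*M + 2) * \<omega>" by (simp add: algebra_simps)
      also have "\<dots> \<le> (8*M + 2) * (e / (10*(M+1)))" using om M0 by (intro mult_left_mono) auto
      also have "\<dots> \<le> e" using e M0 by (simp add: field_simps)
      finally show ?thesis by simp
    qed
    finally show "integral\<^sup>L I11 (\<lambda>x. (min (F x) M)^2) \<le> K + e" unfolding H_def .
  qed
  define f where "f n x = (min (F x) (real n))^2" for n x
  have fi: "integrable I11 (f n)" for n
  proof (rule finite_measure.integrable_const_bound[OF finite_I11, where B="(real n)^2"])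
    show "f n \<in> borel_measurable I11" unfolding f_def by measurable
    show "AE x in I11. norm (f n x) \<le> (real n)^2"
      by (rule AE_I2) (use Fnn in \<open>auto simp: f_def intro: power_mono\<close>)
  qed
  have fmono: "f n x \<le> f (Suc n) x" for n x
    unfolding f_def using Fnn[of x] by (intro power_mono) auto
  have mono: "AE x in I11. mono (\<lambda>n. f n x)"
    by (rule AE_I2) (auto intro: incseq_SucI fmono)
  have lim: "AE x in I11. (\<lambda>n. f n x) \<longlonglongrightarrow> (F x)^2"
  proof (rule AE_I2)
    fix x
    have "eventually (\<lambda>n. f n x = (F x)^2) sequentially"
    proof -
      obtain N :: nat where "F x \<le> real N" using real_arch_simple by blast
      then show ?thesis unfolding f_def eventually_sequentially
        by (intro exI[of _ N]) (auto simp: min_def)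
    qed
    then show "(\<lambda>n. f n x) \<longlonglongrightarrow> (F x)^2" by (rule tendsto_eventually)
  qed
  have inc: "incseq (\<lambda>n. integral\<^sup>L I11 (f n))"
    by (rule incseq_SucI, rule Bochner_Integration.integral_mono[OF fi fi]) (rule fmono)
  have bnd: "\<forall>n. integral\<^sup>L I11 (f n) \<le> K" unfolding f_def using trunc by simp
  obtain L where L: "(\<lambda>n. integral\<^sup>L I11 (f n)) \<longlonglongrightarrow> L" using incseq_convergent[OF inc bnd] by blast
  show ?thesis
    by (rule integrable_monotone_convergence[OF fi mono lim L]) measurable
qed



theorem theorem5p3:
  shows "\<not> (\<exists>(Z :: (real \<Rightarrow> complex) set) nZ.
            banach_function_space Z nZ \<and> L2I \<subseteq> Z \<and> L2I \<noteq> Z \<and> Z \<subseteq> L1I \<and>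
            (\<exists>C. \<forall>f\<in>Z. fhilbert f \<in> L2I \<and> L2norm (fhilbert f) \<le> C * nZ f))"
proof
  assume "\<exists>(Z :: (real \<Rightarrow> complex) set) nZ.
            banach_function_space Z nZ \<and> L2I \<subseteq> Z \<and> L2I \<noteq> Z \<and> Z \<subseteq> L1I \<and>
            (\<exists>C. \<forall>f\<in>Z. fhilbert f \<in> L2I \<and> L2norm (fhilbert f) \<le> C * nZ f)"
  then obtain Z :: "(real \<Rightarrow> complex) set" and nZ C where bfs: "banach_function_space Z nZ"
    and sub: "L2I \<subseteq> Z" "L2I \<noteq> Z" "Z \<subseteq> L1I"
    and Tb: "\<And>f. f \<in> Z \<Longrightarrow> fhilbert f \<in> L2I \<and> L2norm (fhilbert f) \<le> C * nZ f"
    by blast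
  obtain f where f: "f \<in> Z" "f \<notin> L2I" using sub(1,2) by blast
  have meas: "\<forall>f\<in>Z. f \<in> borel_measurable I11" using bfs unfolding banach_function_space_def by blast
  have nn: "\<forall>f\<in>Z. 0 \<le> nZ f" using bfs unfolding banach_function_space_def by blast
  have ideal: "\<forall>f\<in>Z. \<forall>g. g \<in> borel_measurable I11 \<and> (AE x in I11. cmod (g x) \<le> cmod (f x)) \<longrightarrow>
        g \<in> Z \<and> nZ g \<le> nZ f"
    using bfs unfolding banach_function_space_def by blast
  have fm[measurable]: "f \<in> borel_measurable I11" using meas f by blast
  define F where "F x = cmod (f x)" for x
  have Fm: "F \<in> borel_measurable I11" unfolding F_def by measurable
  have Fnn: "\<And>x. 0 \<le> F x" unfolding F_def by simp
  have fi: "integrable I11 f" using f(1) sub(3) unfolding L1I_def by blast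
  have Fi: "integrable I11 F" unfolding F_def using integrable_norm[OF fi] .
  define B where "B = max C 0 * nZ f"
  have bound: "fhilbert g \<in> L2I \<and> L2norm (fhilbert g) \<le> B"
    if gm: "g \<in> borel_measurable I11" and gb: "\<And>x. cmod (g x) \<le> F x" for g
  proof -
    have "g \<in> Z \<and> nZ g \<le> nZ f"
      using ideal f(1) gm gb unfolding F_def by (auto intro!: AE_I2)
    then have gZ: "g \<in> Z" and ng: "nZ g \<le> nZ f" by auto
    have ng0: "0 \<le> nZ g" using nn gZ by blast
    have "C * nZ g \<le> max C 0 * nZ g" using ng0 by (intro mult_right_mono) auto
    also have "\<dots> \<le> max C 0 * nZ f" using ng by (intro mult_left_mono) auto
    finally show ?thesis using Tb[OF gZ] unfolding B_def by auto
  qed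
  have grid: "(\<Sum>k<2*m. (integral\<^sup>L I11 (\<lambda>x. indicator (cell m k) x * F x))^2) \<le> (8 * pi^2 * B^2) / m"
    if m: "m > 0" for m
  proof -
    have h0: "(\<Sum>j<m. (integral\<^sup>L I11 (\<lambda>x. indicator (cell m (2*j+0)) x * F x))^2) \<le> 4 * pi^2 * B^2 / m"
      by (rule grid_half[OF Fm Fnn Fi bound m]) auto
    have h1: "(\<Sum>j<m. (integral\<^sup>L I11 (\<lambda>x. indicator (cell m (2*j+1)) x * F x))^2) \<le> 4 * pi^2 * B^2 / m"
      by (rule grid_half[OF Fm Fnn Fi bound m]) auto
    have "(\<Sum>k<2*m. (integral\<^sup>L I11 (\<lambda>x. indicator (cell m k) x * F x))^2)
        = (\<Sum>j<m. (integral\<^sup>L I11 (\<lambda>x. indicator (cell m (2*j)) x * F x))^2)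
          + (\<Sum>j<m. (integral\<^sup>L I11 (\<lambda>x. indicator (cell m (2*j+1)) x * F x))^2)"
      by (rule sum_even_odd)
    also have "\<dots> \<le> 4 * pi^2 * B^2 / m + 4 * pi^2 * B^2 / m" using add_mono[OF h0 h1] by simp
    also have "\<dots> = (8 * pi^2 * B^2) / m" by (simp add: field_simps)
    finally show ?thesis .
  qed
  have "integrable I11 (\<lambda>x. (F x)^2)"
    by (rule L2_from_grid[OF Fm Fnn Fi grid])
  then have "f \<in> L2I" unfolding L2I_def F_def using fm by simp
  with f(2) show False by simp
qed


end
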